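(* Let $\lambda_{\max}>1$ and let $F:[0,\lambda_{\max}]\to\mathbb{R}_+$ be a continuously differentiable concave function with $F(0)=0$, such that $F(x)<F^\star$ for all $x\in[0,1)$ and $F'(1)>0$. Suppose moreover that $F$ is thrice continuously differentiable on $[0,1)$, that $\lim_{x\to1^-}F''(x)<0$, and that $\sup_{x<1}|F^{(3)}(x)|\le M$ for some $M<\infty$. Then there exist $C_1,\varepsilon_0>0$ (depending on $F$) such that $q^\star(\varepsilon)\ge C_1/\sqrt{\varepsilon}$ for all $\varepsilon\in(0,\varepsilon_0]$.
   Context: A control policy is a function $\lambda:\mathbb{Z}_+\to[0,\lambda_{\max}]$; it defines a continuous-time birth–death chain on $\mathbb{Z}_+$ with rate $\lambda(q)$ from $q$ to $q+1$ and rate $1$ from $q$ to $q-1$ ($q\ge1$). Let $\mathcal S$ be the set of states reachable from $0$. The policy is stable if $\sum_{i\in\mathcal S}\prod_{q=0}^{i}\lambda(q)<\infty$ (positive recurrence on $\mathcal S$); then $\pi$ is its stationary distribution and $\bar q\sim\pi$. $F^\star=\sup\{\mathbb{E}_\alpha[F(X)]:\alpha$ a probability measure on $[0,\lambda_{\max}]$, $X\sim\alpha$, $\mathbb{E}_\alpha[X]\le1\}$; regret $R(\lambda)=F^\star-\mathbb{E}_\pi[F(\lambda(\bar q))]$; $q^\star(\varepsilon)=\inf\{\mathbb{E}_\pi[\bar q]:\lambda$ stable, $R(\lambda)\le\varepsilon\}$. *)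

theory Defs
  imports "HOL-Analysis.Analysis" "HOL-Probability.Probability"
begin

text \<open>Control policies: functions nat to [0, lmax]; rate lam q from q to q+1, rate 1 from q to q-1.\<close>

definition policy :: "real \<Rightarrow> (nat \<Rightarrow> real) \<Rightarrow> bool" where
  "policy lmax lam \<longleftrightarrow> (\<forall>q. 0 \<le> lam q \<and> lam q \<le> lmax)"

definition reachable :: "(nat \<Rightarrow> real) \<Rightarrow> nat set" where
  "reachable lam = {i. \<forall>q<i. lam q > 0}"

definition stable :: "(nat \<Rightarrow> real) \<Rightarrow> bool" where
  "stable lam \<longleftrightarrow> summable (\<lambda>i. if i \<in> reachable lam then (\<Prod>q\<le>i. lam q) else 0)"

definition stat_dist :: "(nat \<Rightarrow> real) \<Rightarrow> nat \<Rightarrow> real" where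
  "stat_dist lam i =
     (if i \<in> reachable lam then (\<Prod>q<i. lam q) else 0) /
     (\<Sum>j. if j \<in> reachable lam then (\<Prod>q<j. lam q) else 0)"

definition mean_queue :: "(nat \<Rightarrow> real) \<Rightarrow> ereal" where
  "mean_queue lam = (\<Sum>i. ereal (real i * stat_dist lam i))"

text \<open>F^star: supremum of E_alpha[F(X)] over probability measures alpha on [0,lmax]
  with E_alpha[X] \<le> 1.  F is composed with the clamp to [0,lmax], which agrees
  with F alpha-almost everywhere and makes the integrand Borel measurable.\<close>
definition Fstar :: "real \<Rightarrow> (real \<Rightarrow> real) \<Rightarrow> real" where
  "Fstar lmax F = Sup {(\<integral>x. F (max 0 (min lmax x)) \<partial>\<alpha>) | \<alpha>.
      prob_space \<alpha> \<and> sets \<alpha> = sets borel \<and> emeasure \<alpha> {0..lmax} = 1 \<and>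
      (\<integral>x. x \<partial>\<alpha>) \<le> 1}"

definition regret :: "real \<Rightarrow> (real \<Rightarrow> real) \<Rightarrow> (nat \<Rightarrow> real) \<Rightarrow> real" where
  "regret lmax F lam = Fstar lmax F - (\<Sum>i. stat_dist lam i * F (lam i))"

definition qstar :: "real \<Rightarrow> (real \<Rightarrow> real) \<Rightarrow> real \<Rightarrow> ereal" where
  "qstar lmax F eps = Inf {mean_queue lam | lam.
      policy lmax lam \<and> stable lam \<and> regret lmax F lam \<le> eps}"

end

theory Submission
  imports Defs
begin


lemma Fstar_ge:
  fixes F :: "real \<Rightarrow> real"
  assumes cont: "continuous_on {0..lmax} F" and l: "1 \<le> lmax"
  shows "F 1 \<le> Fstar lmax F"
proof -
  let ?g = "\<lambda>x. F (max 0 (min lmax x))"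
  have gc: "continuous_on UNIV ?g"
    by (rule continuous_on_compose2[OF cont]) (use l in \<open>auto intro!: continuous_intros\<close>)
  hence gm: "?g \<in> borel_measurable borel" by (simp add: borel_measurable_continuous_onI)
  have "bounded (F ` {0..lmax})"
    by (rule compact_imp_bounded[OF compact_continuous_image[OF cont compact_Icc]])
  then obtain B where B0: "\<forall>y\<in>F ` {0..lmax}. norm y \<le> B" by (auto simp: bounded_iff)
  have B: "\<forall>x\<in>{0..lmax}. F x \<le> B" using B0 by force
  have gB: "?g x \<le> max B 0" for x using B l by (auto intro: le_max_iff_disj[THEN iffD2])
  let ?S = "{(\<integral>x. F (max 0 (min lmax x)) \<partial>\<alpha>) | \<alpha>.
      prob_space \<alpha> \<and> sets \<alpha> = sets borel \<and> emeasure \<alpha> {0..lmax} = 1 \<and>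
      (\<integral>x. x \<partial>\<alpha>) \<le> 1}"
  have bdd: "bdd_above ?S"
  proof (rule bdd_aboveI)
    fix y assume "y \<in> ?S"
    then obtain \<alpha> where a: "prob_space \<alpha>" and y: "y = (\<integral>x. ?g x \<partial>\<alpha>)" by blast
    show "y \<le> max B 0"
    proof (cases "integrable \<alpha> ?g")
      case True
      then show ?thesis using y prob_space.integral_le_const[OF a True] gB by auto
    next
      case False
      then show ?thesis using y not_integrable_integral_eq[OF False] by simp
    qed
  qed
  let ?a = "return borel (1::real)"
  have mem: "F 1 \<in> ?S"
  proof -
    have "prob_space ?a" by (simp add: prob_space_return)
    moreover have "sets ?a = sets borel" by simp
    moreover have "emeasure ?a {0..lmax} = 1" using l by simp
    moreover have "(\<integral>x. x \<partial>?a) = 1" by (simp add: integral_return)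
    moreover have "(\<integral>x. ?g x \<partial>?a) = F 1" using integral_return[of 1 borel ?g] gm l by simp
    ultimately show ?thesis by (smt (verit) mem_Collect_eq)
  qed
  show ?thesis unfolding Fstar_def by (rule cSup_upper[OF mem bdd])
qed


lemma deriv_at_interior:
  fixes f :: "real \<Rightarrow> real" and f' :: real
  assumes "(f has_real_derivative f') (at x within S)" "x \<in> T" "open T" "T \<subseteq> S"
  shows "(f has_real_derivative f') (at x)"
proof -
  have "(f has_real_derivative f') (at x within T)"
    using assms(1,4) by (rule has_field_derivative_subset)
  then show ?thesis using at_within_open[OF assms(2,3)] by simp
qed

lemma tangent_ineq:
  fixes F F1 :: "real \<Rightarrow> real"
  assumes lmax: "lmax > 1"
    and F1: "\<forall>x\<in>{0..lmax}. (F has_real_derivative F1 x) (at x within {0..lmax})"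
    and conc: "concave_on {0..lmax} F"
    and x: "x \<in> {0..lmax}"
  shows "0 \<le> F 1 + F1 1 * (x - 1) - F x"
proof -
  have cv: "convex_on {0..lmax} (\<lambda>x. - F x)" using conc by (simp add: concave_on_def)
  have d: "((\<lambda>x. - F x) has_real_derivative - F1 1) (at 1 within {0..lmax})"
    using F1 lmax by (auto intro!: derivative_eq_intros)
  have "(- F1 1) * (x - 1) \<le> (- F x) - (- F 1)"
    by (rule convex_on_imp_above_tangent[OF cv _ _ x d]) (use lmax in auto)
  then show ?thesis by (simp add: algebra_simps)
qed

lemma quad_ineq:
  fixes F F1 F2 :: "real \<Rightarrow> real"
  assumes lmax: "lmax > 1"
    and F1: "\<forall>x\<in>{0..lmax}. (F has_real_derivative F1 x) (at x within {0..lmax})"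
    and F1_cont: "continuous_on {0..lmax} F1"
    and conc: "concave_on {0..lmax} F"
    and F2: "\<forall>x\<in>{0..<1}. (F1 has_real_derivative F2 x) (at x within {0..<1})"
    and F2_lim: "\<exists>L<0. (F2 \<longlongrightarrow> L) (at_left 1)"
  shows "\<exists>c>0. \<forall>x\<in>{0..lmax}. c * (max 0 (1 - x))^2 \<le> F 1 + F1 1 * (x - 1) - F x"
proof -
  define g where "g x = F 1 + F1 1 * (x - 1) - F x" for x
  have g0: "0 \<le> g x" if "x \<in> {0..lmax}" for x
    unfolding g_def by (rule tangent_ineq[OF lmax F1 conc that])
  obtain L where L: "L < 0" "(F2 \<longlongrightarrow> L) (at_left 1)" using F2_lim by blast
  define k where "k = - L / 4"
  have k: "k > 0" using L by (simp add: k_def)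
  have "eventually (\<lambda>x. F2 x < L / 2) (at_left (1::real))"
    using order_tendstoD(2)[OF L(2), of "L / 2"] L by linarith
  then obtain b where b: "b < 1" "\<forall>y>b. y < 1 \<longrightarrow> F2 y < L / 2"
    by (auto simp: eventually_at_left_field)
  define a where "a = max b (1/2)"
  have a: "1/2 \<le> a" "a < 1" "\<forall>y>a. y < 1 \<longrightarrow> F2 y < -2 * k"
    using b by (auto simp: a_def k_def)
  have dF1: "(F1 has_real_derivative F2 t) (at t)" if "0 < t" "t < 1" for t
    using F2 that by (intro deriv_at_interior[of _ _ _ "{0..<1}" "{0<..<1}"]) auto
  have dF: "(F has_real_derivative F1 t) (at t)" if "0 < t" "t < lmax" for t
    using F1 that by (intro deriv_at_interior[of _ _ _ "{0..lmax}" "{0<..<lmax}"]) auto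
  have Fc: "continuous_on {0..lmax} F"
    by (rule DERIV_continuous_on) (use F1 in auto)
  have phi: "2 * k * (1 - x) \<le> F1 x - F1 1" if "a \<le> x" "x \<le> 1" for x
  proof -
    have "(\<lambda>t. F1 t + 2 * k * t) 1 \<le> (\<lambda>t. F1 t + 2 * k * t) x"
    proof (rule DERIV_nonpos_imp_decreasing_open[OF that(2)])
      fix t assume t: "x < t" "t < 1"
      have "((\<lambda>t. F1 t + 2 * k * t) has_real_derivative F2 t + 2 * k) (at t)"
        using dF1[of t] t that a by (auto intro!: derivative_eq_intros)
      moreover have "F2 t + 2 * k \<le> 0" using a(3) t that by force
      ultimately show "\<exists>y. ((\<lambda>t. F1 t + 2 * k * t) has_real_derivative y) (at t) \<and> y \<le> 0" by blast
    next
      show "continuous_on {x..1} (\<lambda>t. F1 t + 2 * k * t)"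
        using that a lmax by (intro continuous_intros continuous_on_subset[OF F1_cont]) auto
    qed
    then show ?thesis by (simp add: algebra_simps)
  qed
  have near: "k * (1 - x)^2 \<le> g x" if "a \<le> x" "x \<le> 1" for x
  proof -
    let ?h = "\<lambda>t. g t - k * (1 - t)^2"
    have "?h 1 \<le> ?h x"
    proof (rule DERIV_nonpos_imp_decreasing_open[OF that(2)])
      fix t assume t: "x < t" "t < 1"
      have "(?h has_real_derivative F1 1 - F1 t + 2 * k * (1 - t)) (at t)"
        unfolding g_def using dF[of t] t that a lmax
        by (auto intro!: derivative_eq_intros simp: power2_eq_square algebra_simps)
      moreover have "F1 1 - F1 t + 2 * k * (1 - t) \<le> 0" using phi[of t] t that by auto
      ultimately show "\<exists>y. (?h has_real_derivative y) (at t) \<and> y \<le> 0" by blast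
    next
      show "continuous_on {x..1} ?h"
        unfolding g_def using that a lmax by (intro continuous_intros continuous_on_subset[OF Fc]) auto
    qed
    then show ?thesis by (simp add: g_def)
  qed
  define c where "c = k * (1 - a)^2"
  have c: "c > 0" using k a by (simp add: c_def)
  have c1: "c \<le> k" unfolding c_def using k a
    by (simp add: power_le_one mult_left_le)
  have ga: "c \<le> g a" using near[of a] a by (simp add: c_def)
  have "c * (max 0 (1 - x))^2 \<le> g x" if x: "x \<in> {0..lmax}" for x
  proof (cases "x \<le> a")
    case True
    define t where "t = (1 - a) / (1 - x)"
    have t: "0 \<le> t" "t \<le> 1" using True a by (auto simp: t_def)
    have tx: "t * (1 - x) = 1 - a" using True a by (simp add: t_def)
    have ax: "a = (1 - t) * 1 + t * x" using tx by (simp add: algebra_simps)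
    have "(1 - t) * F 1 + t * F x \<le> F ((1 - t) *\<^sub>R 1 + t *\<^sub>R x)"
      by (rule concave_onD[OF conc t]) (use x lmax in auto)
    moreover have "(1 - t) *\<^sub>R 1 + t *\<^sub>R x = a" using ax by simp
    ultimately have Fa: "(1 - t) * F 1 + t * F x \<le> F a" by simp
    have "t * g x = t * F 1 + F1 1 * (t * (x - 1)) - t * F x" by (simp add: g_def algebra_simps)
    also have "t * (x - 1) = a - 1" using tx by (simp add: algebra_simps)
    finally have "t * g x = t * F 1 + F1 1 * (a - 1) - t * F x" .
    hence "g a \<le> t * g x" using Fa unfolding g_def by (simp add: algebra_simps)
    also have "\<dots> \<le> g x" using t g0[OF x] by (simp add: mult_left_le_one_le)
    finally have "c \<le> g x" using ga by simp
    moreover have "(max 0 (1 - x))^2 \<le> 1" using x a True by (auto simp: power_le_one)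
    ultimately show ?thesis using c
      by (smt (verit) mult_left_le)
  next
    case False
    show ?thesis
    proof (cases "x \<le> 1")
      case True
      then have "c * (max 0 (1 - x))^2 \<le> k * (1 - x)^2" using c1 False by (simp add: mult_right_mono)
      then show ?thesis using near[of x] True False by simp
    next
      case False
      then show ?thesis using g0[OF x] by simp
    qed
  qed
  then show ?thesis using c unfolding g_def by blast
qed


lemma core_abstract:
  fixes w lam G :: "nat \<Rightarrow> real" and A c eps :: real
  assumes w0: "w 0 = 1" and wS: "\<And>i. w (Suc i) = lam i * w i" and wnn: "\<And>i. 0 \<le> w i"
    and sw: "summable w" and lam: "\<And>i. 0 \<le> lam i"
    and c: "c > 0" and A: "A > 0"
    and G: "\<And>i. c * (max 0 (1 - lam i))^2 \<le> G i" and sG: "summable (\<lambda>i. w i * G i)"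
    and reg: "A + (\<Sum>i. w i * G i) \<le> eps * (\<Sum>i. w i)"
    and eps: "eps > 0" "eps \<le> A / 4" "eps \<le> c / 64"
    and sS: "summable (\<lambda>i. real i * w i)"
  shows "sqrt c / 16 / sqrt eps \<le> (\<Sum>i. real i * w i) / (\<Sum>i. w i)"
proof -
  define Z where "Z = (\<Sum>i. w i)"
  define S where "S = (\<Sum>i. real i * w i)"
  define d where "d i = max 0 (1 - lam i)" for i
  have d: "0 \<le> d i" "d i \<le> 1" "1 - lam i \<le> d i" for i using lam[of i] by (auto simp: d_def)
  have Z1: "1 \<le> Z" unfolding Z_def
    using sum_le_suminf[OF sw, of "{0}"] wnn w0 by simp
  have Gnn: "0 \<le> G i" for i using G[of i] c by (smt (verit) mult_nonneg_nonneg zero_le_power2)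
  have sGnn: "0 \<le> (\<Sum>i. w i * G i)" using sG wnn Gnn by (simp add: suminf_nonneg)
  have AZ: "A \<le> eps * Z" using reg sGnn unfolding Z_def by linarith
  have invZ: "1 / Z \<le> 1 / 4"
  proof -
    have "1 / Z \<le> eps / A" using AZ Z1 A by (simp add: field_simps)
    also have "\<dots> \<le> 1 / 4" using eps A by (simp add: field_simps)
    finally show ?thesis .
  qed
  define s where "s = sqrt (eps / c)"
  have s1: "s > 0" using c eps by (simp add: s_def)
  have s2: "s * s = eps / c" using c eps by (simp add: s_def)
  have s3: "s \<le> 1 / 8" unfolding s_def
    by (rule real_le_lsqrt) (use c eps in \<open>auto simp: power2_eq_square field_simps\<close>)
  note s = s1 s2 s3
  have sD2: "summable (\<lambda>i. w i * (d i)^2)"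
  proof (rule summable_comparison_test'[OF sw])
    fix n
    have "(d n)^2 \<le> 1" using d[of n] by (simp add: power_le_one)
    then show "norm (w n * (d n)^2) \<le> w n" using wnn[of n] by (simp add: abs_mult mult_left_le)
  qed
  have D2: "c * (\<Sum>i. w i * (d i)^2) \<le> eps * Z"
  proof -
    have "c * (\<Sum>i. w i * (d i)^2) = (\<Sum>i. c * (w i * (d i)^2))" using sD2 by (simp add: suminf_mult)
    also have "\<dots> \<le> (\<Sum>i. w i * G i)"
    proof (rule suminf_le)
      fix n
      have "w n * (c * (d n)^2) \<le> w n * G n" using G[of n] wnn[of n] by (simp add: d_def mult_left_mono)
      then show "c * (w n * (d n)^2) \<le> w n * G n" by (simp add: algebra_simps)
    qed (use sD2 sG in \<open>auto intro!: summable_mult\<close>)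
    finally show ?thesis using reg A unfolding Z_def by linarith
  qed
  have sD1: "summable (\<lambda>i. w i * d i)"
  proof (rule summable_comparison_test'[OF sw])
    fix n
    show "norm (w n * d n) \<le> w n" using wnn[of n] d[of n] by (simp add: abs_mult mult_left_le)
  qed
  have D1: "(\<Sum>i. w i * d i) \<le> s * Z"
  proof -
    have tw: "w i * d i \<le> (1 / (2 * s)) * (w i * (d i)^2) + (s / 2) * w i" for i
    proof -
      have "0 \<le> (d i - s)^2" by simp
      hence "d i \<le> (d i)^2 / (2 * s) + s / 2" using s by (simp add: field_simps power2_eq_square)
      hence "w i * d i \<le> w i * ((d i)^2 / (2 * s) + s / 2)" using wnn[of i] by (rule mult_left_mono)
      thus ?thesis by (simp add: algebra_simps)
    qed
    have "(\<Sum>i. w i * d i) \<le> (\<Sum>i. (1 / (2 * s)) * (w i * (d i)^2) + (s / 2) * w i)"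
      by (rule suminf_le[OF tw sD1]) (intro summable_add summable_mult sD2 sw)
    also have "\<dots> = (1 / (2 * s)) * (\<Sum>i. w i * (d i)^2) + (s / 2) * Z"
    proof -
      have e1: "(\<Sum>i. (1 / (2 * s)) * (w i * (d i)^2) + (s / 2) * w i) = (\<Sum>i. (1 / (2 * s)) * (w i * (d i)^2)) + (\<Sum>i. (s / 2) * w i)"
        by (intro suminf_add[symmetric] summable_mult sD2 sw)
      have e2: "(\<Sum>i. (1 / (2 * s)) * (w i * (d i)^2)) = (1 / (2 * s)) * (\<Sum>i. w i * (d i)^2)" by (rule suminf_mult[OF sD2])
      have e3: "(\<Sum>i. (s / 2) * w i) = (s / 2) * Z" unfolding Z_def by (rule suminf_mult[OF sw])
      show ?thesis using e1 e2 e3 by linarith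
    qed
    also have "\<dots> \<le> (1 / (2 * s)) * (eps * Z / c) + (s / 2) * Z"
    proof -
      have "(\<Sum>i. w i * (d i)^2) \<le> eps * Z / c" using D2 c by (simp add: pos_le_divide_eq mult.commute)
      then show ?thesis using s by (intro add_right_mono mult_left_mono) auto
    qed
    also have "\<dots> = s * Z" using s c by (simp add: field_simps)
    finally show ?thesis .
  qed
  define m where "m = S / Z"
  have Snn: "0 \<le> S" unfolding S_def using sS wnn by (simp add: suminf_nonneg)
  have m0: "0 \<le> m" using Snn Z1 by (simp add: m_def)
  define N where "N = Suc (nat \<lceil>4 * m\<rceil>)"
  have N: "4 * m \<le> real N" "real N \<le> 4 * m + 2" "1 \<le> real N"
  proof -
    have c0: "0 \<le> \<lceil>4 * m\<rceil>" using m0 by simp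
    have rN: "real N = real_of_int \<lceil>4 * m\<rceil> + 1" using c0 by (simp add: N_def)
    show "4 * m \<le> real N" "real N \<le> 4 * m + 2" "1 \<le> real N"
      using rN c0 le_of_int_ceiling[of "4*m"] of_int_ceiling_le_add_one[of "4*m"] by linarith+
  qed
  define a where "a i = real (min i N)" for i
  have w_lim: "w \<longlonglongrightarrow> 0" by (rule summable_LIMSEQ_zero[OF sw])
  have b_lim: "(\<lambda>i. w i * a i) \<longlonglongrightarrow> 0"
  proof (rule tendsto_sandwich[of "\<lambda>_. 0" _ _ "\<lambda>i. real N * w i"])
    show "\<forall>\<^sub>F i in sequentially. 0 \<le> w i * a i" using wnn by (auto simp: a_def)
    show "\<forall>\<^sub>F i in sequentially. w i * a i \<le> real N * w i"
    proof (intro always_eventually allI)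
      fix i
      have "w i * real (min i N) \<le> w i * real N" using wnn[of i] by (intro mult_left_mono) auto
      then show "w i * a i \<le> real N * w i" by (simp add: a_def mult.commute)
    qed
    show "(\<lambda>i. real N * w i) \<longlonglongrightarrow> 0" using tendsto_mult_right_zero[OF w_lim] by simp
  qed simp
  define T where "T = (\<Sum>i<N. w (Suc i))"
  have id: "(\<lambda>i. w i * (1 - lam i) * a i) sums T"
  proof -
    have t1: "(\<lambda>i. w i * a i - w (Suc i) * a (Suc i)) sums (w 0 * a 0 - 0)"
      by (rule telescope_sums'[OF b_lim])
    have t2: "(\<lambda>i. if i < N then w (Suc i) else 0) sums T"
      unfolding T_def using sums_finite[of "{..<N}" "\<lambda>i. if i < N then w (Suc i) else 0"] by simp
    have "(\<lambda>i. (w i * a i - w (Suc i) * a (Suc i)) + (if i < N then w (Suc i) else 0)) sums (0 + T)"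
      using sums_add[OF t1 t2] by (simp add: a_def)
    moreover have "(w i * a i - w (Suc i) * a (Suc i)) + (if i < N then w (Suc i) else 0)
        = w i * (1 - lam i) * a i" for i
      by (auto simp: a_def wS algebra_simps min_def)
    ultimately show ?thesis by simp
  qed
  have TN: "T \<le> real N * s * Z"
  proof -
    have "T \<le> (\<Sum>i. real N * (w i * d i))"
    proof (rule sums_le[OF _ id])
      show "(\<lambda>i. real N * (w i * d i)) sums (\<Sum>i. real N * (w i * d i))"
        using sD1 by (intro summable_sums summable_mult)
      fix i
      have "w i * (1 - lam i) * a i \<le> w i * d i * a i"
        using wnn[of i] d[of i] by (auto simp: a_def intro!: mult_right_mono mult_left_mono)
      also have "\<dots> \<le> w i * d i * real N"
        using wnn[of i] d[of i] by (auto simp: a_def intro!: mult_left_mono)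
      finally show "w i * (1 - lam i) * a i \<le> real N * (w i * d i)" by (simp add: algebra_simps)
    qed
    also have "\<dots> = real N * (\<Sum>i. w i * d i)" using sD1 by (simp add: suminf_mult)
    also have "\<dots> \<le> real N * (s * Z)" using D1 by (simp add: mult_left_mono)
    finally show ?thesis by (simp add: algebra_simps)
  qed
  have ZT: "Z \<le> 1 + T + S / real N"
  proof -
    have fin: "(\<lambda>j. if j \<le> N then w j else 0) sums (\<Sum>j\<le>N. w j)"
      using sums_finite[of "{..N}" "\<lambda>j. if j \<le> N then w j else 0"] by simp
    have "Z \<le> (\<Sum>j. (if j \<le> N then w j else 0) + real j * w j / real N)"
      unfolding Z_def
    proof (rule suminf_le)
      fix j
      show "w j \<le> (if j \<le> N then w j else 0) + real j * w j / real N"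
      proof (cases "j \<le> N")
        case True then show ?thesis using wnn[of j] N by simp
      next
        case False
        then have "1 \<le> real j / real N" using N by simp
        then have "w j * 1 \<le> w j * (real j / real N)" using wnn[of j] by (rule mult_left_mono)
        then show ?thesis using False by (simp add: mult.commute)
      qed
    qed (use sw fin sS in \<open>auto intro!: summable_add summable_divide simp: sums_iff\<close>)
    also have "\<dots> = (\<Sum>j\<le>N. w j) + S / real N"
      using fin sS unfolding S_def by (simp add: suminf_add[symmetric] sums_iff suminf_divide)
    also have "(\<Sum>j\<le>N. w j) = 1 + T" unfolding T_def by (simp add: sum.atMost_shift w0)
    finally show ?thesis .
  qed
  have key: "1 / 2 \<le> real N * s"
  proof -
    have "1 \<le> 1 / Z + real N * s + m / real N"
    proof -
      have "Z \<le> 1 + real N * s * Z + S / real N" using ZT TN by linarith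
      hence "Z / Z \<le> (1 + real N * s * Z + S / real N) / Z" using Z1 by (intro divide_right_mono) auto
      thus ?thesis using Z1 by (simp add: m_def field_simps)
    qed
    moreover have "m / real N \<le> 1 / 4" using N m0 by (simp add: field_simps)
    ultimately show ?thesis using invZ by linarith
  qed
  have "1 / 4 \<le> 4 * m * s"
  proof -
    have "1 / 2 \<le> (4 * m + 2) * s" using key N(2) s by (smt (verit) mult_right_mono)
    thus ?thesis using s by (simp add: algebra_simps)
  qed
  hence "1 / (16 * s) \<le> m" using s by (simp add: field_simps)
  moreover have "1 / (16 * s) = sqrt c / 16 / sqrt eps"
    using c eps by (simp add: s_def real_sqrt_divide field_simps)
  ultimately show ?thesis by (simp add: m_def S_def Z_def)
qed


lemma w_props:
  fixes lam :: "nat \<Rightarrow> real"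
  assumes lam: "\<And>q. 0 \<le> lam q"
  defines "w \<equiv> \<lambda>i. if i \<in> reachable lam then (\<Prod>q<i. lam q) else 0"
  shows "w 0 = 1" "\<And>i. w (Suc i) = lam i * w i" "\<And>i. 0 \<le> w i"
    "stable lam \<Longrightarrow> summable w"
proof -
  show "w 0 = 1" by (simp add: w_def reachable_def)
  have reachS: "Suc i \<in> reachable lam \<longleftrightarrow> i \<in> reachable lam \<and> lam i > 0" for i
    by (auto simp: reachable_def less_Suc_eq)
  show wS: "w (Suc i) = lam i * w i" for i
  proof (cases "i \<in> reachable lam \<and> lam i > 0")
    case True then show ?thesis using reachS[of i] by (simp add: w_def)
  next
    case False
    then have "i \<notin> reachable lam \<or> lam i = 0" using lam[of i] by auto
    then show ?thesis using reachS[of i] by (auto simp: w_def)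
  qed
  show "0 \<le> w i" for i using lam by (simp add: w_def prod_nonneg)
  assume st: "stable lam"
  have "(\<lambda>i. if i \<in> reachable lam then (\<Prod>q\<le>i. lam q) else 0) = (\<lambda>i. w (Suc i))"
  proof
    fix i
    show "(if i \<in> reachable lam then (\<Prod>q\<le>i. lam q) else 0) = w (Suc i)"
      using wS[of i] by (auto simp: w_def lessThan_Suc_atMost[symmetric] mult.commute)
  qed
  then have "summable (\<lambda>i. w (Suc i))" using st by (simp add: stable_def)
  then show "summable w" by (simp add: summable_Suc_iff)
qed


theorem propositionC3:
  fixes lmax :: real and F F1 F2 F3 :: "real \<Rightarrow> real"
  assumes lmax: "lmax > 1"
    and nonneg: "\<forall>x\<in>{0..lmax}. F x \<ge> 0"
    and F1: "\<forall>x\<in>{0..lmax}. (F has_real_derivative F1 x) (at x within {0..lmax})"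
    and F1_cont: "continuous_on {0..lmax} F1"
    and conc: "concave_on {0..lmax} F"
    and F0: "F 0 = 0"
    and below: "\<forall>x\<in>{0..<1}. F x < Fstar lmax F"
    and F1_pos: "F1 1 > 0"
    and F2: "\<forall>x\<in>{0..<1}. (F1 has_real_derivative F2 x) (at x within {0..<1})"
    and F3: "\<forall>x\<in>{0..<1}. (F2 has_real_derivative F3 x) (at x within {0..<1})"
    and F3_cont: "continuous_on {0..<1} F3"
    and F2_lim: "\<exists>L<0. (F2 \<longlongrightarrow> L) (at_left 1)"
    and F3_bdd: "\<exists>M. \<forall>x\<in>{0..<1}. \<bar>F3 x\<bar> \<le> M"
  shows "\<exists>C1>0. \<exists>eps0>0. \<forall>eps\<in>{0<..eps0}. qstar lmax F eps \<ge> ereal (C1 / sqrt eps)"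
proof -
  obtain c where c: "c > 0" and cq: "\<forall>x\<in>{0..lmax}. c * (max 0 (1 - x))^2 \<le> F 1 + F1 1 * (x - 1) - F x"
    using quad_ineq[OF lmax F1 F1_cont conc F2 F2_lim] by blast
  have Fc: "continuous_on {0..lmax} F"
    by (rule DERIV_continuous_on) (use F1 in auto)
  have Fstar1: "F 1 \<le> Fstar lmax F" by (rule Fstar_ge[OF Fc]) (use lmax in auto)
  define Bd where "Bd = F 1 + F1 1 * lmax"
  have FB: "F x \<le> Bd" if "x \<in> {0..lmax}" for x
  proof -
    have "0 \<le> F 1 + F1 1 * (x - 1) - F x" by (rule tangent_ineq[OF lmax F1 conc that])
    moreover have "F1 1 * (x - 1) \<le> F1 1 * lmax" using that F1_pos by (intro mult_left_mono) auto
    ultimately show ?thesis by (simp add: Bd_def)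
  qed
  define C1 where "C1 = sqrt c / 16"
  define eps0 where "eps0 = min (F1 1 / 4) (c / 64)"
  have "\<forall>eps\<in>{0<..eps0}. qstar lmax F eps \<ge> ereal (C1 / sqrt eps)"
  proof
    fix eps :: real assume eps: "eps \<in> {0<..eps0}"
    show "qstar lmax F eps \<ge> ereal (C1 / sqrt eps)"
      unfolding qstar_def
    proof (rule Inf_greatest, safe)
      fix lam assume pol: "policy lmax lam" and st: "stable lam" and rg: "regret lmax F lam \<le> eps"
      have lam0: "\<And>q. 0 \<le> lam q" and laml: "\<And>q. lam q \<le> lmax" using pol by (auto simp: policy_def)
      define w where "w = (\<lambda>i. if i \<in> reachable lam then (\<Prod>q<i. lam q) else 0)"
      have w0: "w 0 = 1" and wS: "\<And>i. w (Suc i) = lam i * w i" and wnn: "\<And>i. 0 \<le> w i"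
        and sw: "summable w"
        using w_props[OF lam0] st unfolding w_def by auto
      define Z where "Z = (\<Sum>i. w i)"
      have Z1: "1 \<le> Z" unfolding Z_def
        using sum_le_suminf[OF sw, of "{0}"] wnn w0 by simp
      have sd: "stat_dist lam i = w i / Z" for i by (simp add: stat_dist_def w_def Z_def)
      have lamI: "lam i \<in> {0..lmax}" for i using lam0 laml by auto
      have sP: "summable (\<lambda>i. w i * F (lam i))"
      proof (rule summable_comparison_test'[of "\<lambda>i. Bd * w i"])
        show "summable (\<lambda>i. Bd * w i)" by (intro summable_mult sw)
        fix n
        have "0 \<le> F (lam n)" using nonneg lamI by auto
        moreover have "F (lam n) \<le> Bd" using FB lamI by auto
        ultimately show "norm (w n * F (lam n)) \<le> Bd * w n" using wnn[of n]
          by (simp add: abs_mult mult.commute[of Bd] mult_left_mono)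
      qed
      define P where "P = (\<Sum>i. w i * F (lam i))"
      have "regret lmax F lam = Fstar lmax F - (\<Sum>i. w i * F (lam i) / Z)"
        by (simp add: regret_def sd)
      also have "(\<Sum>i. w i * F (lam i) / Z) = P / Z" unfolding P_def by (rule suminf_divide[OF sP])
      finally have "F 1 - P / Z \<le> eps" using rg Fstar1 by linarith
      hence regZ: "F 1 * Z - P \<le> eps * Z" using Z1 by (simp add: field_simps)
      define G where "G i = F 1 + F1 1 * (lam i - 1) - F (lam i)" for i
      have Gc: "c * (max 0 (1 - lam i))^2 \<le> G i" for i using cq lamI[of i] by (simp add: G_def)
      have wG: "w i * G i = F 1 * w i - F1 1 * (w i - w (Suc i)) - w i * F (lam i)" for i
        by (simp add: G_def wS algebra_simps)
      have wlim: "w \<longlonglongrightarrow> 0" by (rule summable_LIMSEQ_zero[OF sw])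
      have tel: "(\<lambda>i. w i - w (Suc i)) sums 1" using telescope_sums'[OF wlim] w0 by simp
      have sums_wG: "(\<lambda>i. w i * G i) sums (F 1 * Z - F1 1 * 1 - P)"
        unfolding wG Z_def P_def
        by (intro sums_diff sums_mult sums_mult summable_sums sw sP tel)
      have sG: "summable (\<lambda>i. w i * G i)" using sums_wG by (rule sums_summable)
      have reg: "F1 1 + (\<Sum>i. w i * G i) \<le> eps * (\<Sum>i. w i)"
        using sums_unique[OF sums_wG] regZ unfolding Z_def by simp
      have epsb: "eps > 0" "eps \<le> F1 1 / 4" "eps \<le> c / 64" using eps by (auto simp: eps0_def)
      have mq: "mean_queue lam = (\<Sum>i. ereal (real i * w i / Z))"
        by (simp add: mean_queue_def sd)
      show "ereal (C1 / sqrt eps) \<le> mean_queue lam"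
      proof (cases "summable (\<lambda>i. real i * w i)")
        case True
        have "C1 / sqrt eps \<le> (\<Sum>i. real i * w i) / Z"
          using core_abstract[OF w0 wS wnn sw lam0 c F1_pos Gc sG reg epsb True]
          by (simp add: C1_def Z_def)
        also have "\<dots> = (\<Sum>i. real i * w i / Z)" by (rule suminf_divide[OF True, symmetric])
        finally show ?thesis unfolding mq
          using suminf_ereal'[OF summable_divide[OF True, of Z]] by simp
      next
        case False
        have nn: "\<And>i. 0 \<le> real i * w i / Z" using wnn Z1 by simp
        have "\<exists>n. C1 / sqrt eps < (\<Sum>i<n. real i * w i / Z)"
        proof (rule ccontr)
          assume "\<not> ?thesis"
          hence "summable (\<lambda>i. real i * w i / Z)"
            by (intro summableI_nonneg_bounded[OF nn]) (auto simp: not_less)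
          hence "summable (\<lambda>i. (real i * w i / Z) * Z)" by (rule summable_mult2)
          thus False using False Z1 by simp
        qed
        then obtain n where n: "C1 / sqrt eps < (\<Sum>i<n. real i * w i / Z)" by blast
        have "ereal (C1 / sqrt eps) \<le> (\<Sum>i<n. ereal (real i * w i / Z))" using n by simp
        also have "\<dots> \<le> (\<Sum>i. ereal (real i * w i / Z))" by (rule suminf_upper) (simp add: nn)
        finally show ?thesis unfolding mq .
      qed
    qed
  qed
  moreover have "C1 > 0" using c by (simp add: C1_def)
  moreover have "eps0 > 0" using c F1_pos by (simp add: eps0_def)
  ultimately show ?thesis by blast
qed

end
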